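(* Let $B_0$ be a finite Blaschke product, $\gamma\in\mathbb D$, and $m$ a positive integer. Then there exist $\zeta^*\in\mathbb D$ and a holomorphic map $f:\mathbb D\to\mathbb D$ such that $f=B_0\tilde g$ with $\tilde g$ holomorphic on $\mathbb D$, and $f(\zeta^*+h)=\gamma+O(h^m)$ as $h\to0$.
   Context: $\mathbb D$ is the open unit disc in $\mathbb C$. *)

theory Defs
  imports "HOL-Complex_Analysis.Complex_Analysis" "HOL-Library.Landau_Symbols"
begin

definition blaschke :: "complex \<Rightarrow> complex list \<Rightarrow> complex \<Rightarrow> complex" where
  "blaschke c as z = c * (\<Prod>a\<leftarrow>as. (z - a) / (1 - cnj a * z))"

definition finite_blaschke_product :: "(complex \<Rightarrow> complex) \<Rightarrow> bool" where
  "finite_blaschke_product B \<longleftrightarrow>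
     (\<exists>c as. norm c = 1 \<and> (\<forall>a\<in>set as. norm a < 1) \<and>
        (\<forall>z\<in>ball 0 1. B z = blaschke c as z))"

end

theory Submission imports Defs begin

lemma lt1: "0 \<le> (x::real) \<Longrightarrow> x < 1 \<Longrightarrow> 0 \<le> y \<Longrightarrow> y \<le> 1 \<Longrightarrow> x * y < 1"
  by (metis mult_left_mono mult.right_neutral order_le_less_trans)

lemma ne1: "norm (x::complex) < 1 \<Longrightarrow> 1 - x \<noteq> 0"
  by (metis right_minus_eq norm_one less_irrefl)

lemma ne1': "norm (x::complex) < 1 \<Longrightarrow> 1 + x \<noteq> 0"
  by (metis add_eq_0_iff norm_minus_cancel norm_one less_irrefl)

lemma nm1: "norm (x::complex) < 1 \<Longrightarrow> norm (y::complex) < 1 \<Longrightarrow> norm (cnj x * y) < 1"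
  by (simp add: norm_mult) (intro lt1; simp add: less_imp_le)

lemma bl_factor: "(z - a) / (1 - cnj a * z) = Moebius_function 0 a z"
  by (simp add: Moebius_function_simple)

lemma bl_holo: "(\<forall>a\<in>set as. norm a < 1) \<Longrightarrow> blaschke c as holomorphic_on ball 0 1"
proof (induction as)
  case Nil
  then show ?case by (simp add: blaschke_def)
next
  case (Cons a as)
  have h: "Moebius_function 0 a holomorphic_on ball 0 1"
    using Cons.prems by (intro Moebius_function_holomorphic) auto
  have e: "blaschke c (a # as) = (\<lambda>z. Moebius_function 0 a z * blaschke c as z)"
    by (auto simp: blaschke_def bl_factor fun_eq_iff)
  show ?case unfolding e using Cons h by (intro holomorphic_intros) auto
qed

lemma bl_norm_le: "(\<forall>a\<in>set as. norm a < 1) \<Longrightarrow> norm z < 1 \<Longrightarrow>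
   norm (\<Prod>a\<leftarrow>as. (z - a) / (1 - cnj a * z)) \<le> 1 \<and> (as \<noteq> [] \<longrightarrow> norm (\<Prod>a\<leftarrow>as. (z - a) / (1 - cnj a * z)) < 1)"
proof (induction as)
  case Nil
  then show ?case by simp
next
  case (Cons a as)
  have h: "norm (Moebius_function 0 a z) < 1"
    using Cons.prems by (intro Moebius_function_norm_lt_1) auto
  have "norm (\<Prod>a\<leftarrow>as. (z - a) / (1 - cnj a * z)) \<le> 1" using Cons by auto
  then have "norm ((z - a) / (1 - cnj a * z) * (\<Prod>a\<leftarrow>as. (z - a) / (1 - cnj a * z))) < 1"
    using h unfolding bl_factor norm_mult
    by (intro lt1) auto
  then show ?case by simp
qed

lemma bl_at1: "(\<forall>a\<in>set as. norm a < 1) \<Longrightarrow> norm (\<Prod>a\<leftarrow>as. (1 - a) / (1 - cnj a * 1)) = 1"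
proof (induction as)
  case Nil
  then show ?case by simp
next
  case (Cons a as)
  have "norm (1 - cnj a) = norm (1 - a)"
    by (metis complex_cnj_diff complex_cnj_one complex_mod_cnj)
  moreover have "1 - a \<noteq> 0" using Cons.prems by auto
  ultimately have "norm ((1 - a) / (1 - cnj a * 1)) = 1" by (simp add: norm_divide)
  moreover have "(\<Prod>a\<leftarrow>a#as. (1 - a) / (1 - cnj a * 1)) = ((1 - a) / (1 - cnj a * 1)) * (\<Prod>a\<leftarrow>as. (1 - a) / (1 - cnj a * 1))"
    by simp
  ultimately show ?case using Cons by (simp only: norm_mult) simp
qed

lemma bl_cont: "(\<forall>a\<in>set as. norm a < 1) \<Longrightarrow> isCont (\<lambda>z. \<Prod>a\<leftarrow>as. (z - a) / (1 - cnj a * z)) 1"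
proof (induction as)
  case Nil
  then show ?case by simp
next
  case (Cons a as)
  have "1 - cnj a * 1 \<noteq> 0" using Cons.prems
    by (metis complex_mod_cnj list.set_intros(1) mult_1_right norm_one order_less_irrefl right_minus_eq)
  then have "isCont (\<lambda>z. (z - a) / (1 - cnj a * z)) 1"
    by (intro continuous_intros) auto
  then have "isCont (\<lambda>z. (z - a) / (1 - cnj a * z) * (\<Prod>a\<leftarrow>as. (z - a) / (1 - cnj a * z))) 1"
    using Cons by (intro continuous_mult) auto
  then show ?case by simp
qed

theorem mainTheorem9:
  fixes B0 :: "complex \<Rightarrow> complex" and \<gamma> :: complex and m :: nat
  assumes "finite_blaschke_product B0"
    and "\<gamma> \<in> ball 0 1"
    and "m > 0"
  shows "\<exists>\<zeta>\<in>ball 0 1. \<exists>f g.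
           f holomorphic_on ball 0 1 \<and> f ` ball 0 1 \<subseteq> ball 0 1 \<and>
           g holomorphic_on ball 0 1 \<and> (\<forall>z\<in>ball 0 1. f z = B0 z * g z) \<and>
           (\<lambda>h. f (\<zeta> + h) - \<gamma>) \<in> O[at 0](\<lambda>h. h ^ m)"
proof -
  obtain c as where c: "norm c = 1" and as: "\<forall>a\<in>set as. norm a < 1"
    and eq: "\<forall>z\<in>ball 0 1. B0 z = blaschke c as z"
    using assms(1) unfolding finite_blaschke_product_def by blast
  have g1: "norm \<gamma> < 1" using assms(2) by simp
  show ?thesis
  proof (cases "as = []")
    case True
    have c0: "c \<noteq> 0" using c by auto
    have "(\<lambda>h. (\<lambda>_. \<gamma>) ((0::complex) + h) - \<gamma>) \<in> O[at 0](\<lambda>h. h ^ m)" by simp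
    moreover have "\<forall>z\<in>ball 0 1. (\<lambda>_. \<gamma>) z = B0 z * (\<lambda>_. \<gamma> / c) z"
      using eq True c0 by (simp add: blaschke_def)
    ultimately show ?thesis using assms(2)
      by (intro bexI[of _ 0] exI[of _ "\<lambda>_. \<gamma>"] exI[of _ "\<lambda>_. \<gamma> / c"]) auto
  next
    case False
    have Bh: "B0 holomorphic_on ball 0 1"
      using bl_holo[OF as, of c] eq by (metis holomorphic_cong)
    have Bb: "norm (B0 z) < 1" if "z \<in> ball 0 1" for z
    proof -
      have "norm z < 1" using that by simp
      then have "norm (\<Prod>a\<leftarrow>as. (z - a) / (1 - cnj a * z)) < 1"
        using bl_norm_le[OF as] False by blast
      then show ?thesis using eq that c by (simp add: blaschke_def norm_mult)
    qed
    have "isCont (\<lambda>r::real. norm (blaschke c as (complex_of_real r)) ^ m) 1"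
    proof -
      have "isCont (blaschke c as) (complex_of_real 1)"
        unfolding blaschke_def using bl_cont[OF as] by (simp add: continuous_mult)
      then have "isCont (\<lambda>r::real. blaschke c as (complex_of_real r)) 1"
        by (intro isCont_o2[where f=complex_of_real and a=1 and g="blaschke c as"]) (auto intro: continuous_intros)
      then show ?thesis by (intro continuous_intros)
    qed
    moreover have "norm (blaschke c as (complex_of_real 1)) ^ m = 1"
      using bl_at1[OF as] c by (simp add: blaschke_def norm_mult)
    ultimately have "((\<lambda>r::real. norm (blaschke c as (complex_of_real r)) ^ m) \<longlongrightarrow> 1) (at 1)"
      unfolding isCont_def by simp
    then have "((\<lambda>r::real. norm (blaschke c as (complex_of_real r)) ^ m) \<longlongrightarrow> 1) (at_left 1)"
      by (rule tendsto_within_subset) auto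
    then have ev1: "eventually (\<lambda>r. norm (blaschke c as (complex_of_real r)) ^ m > norm \<gamma>) (at_left (1::real))"
      using g1 by (intro order_tendstoD) auto
    have ev2: "eventually (\<lambda>r. 0 < r \<and> r < (1::real)) (at_left 1)"
      using eventually_at_left_real[of 0 1] by simp
    obtain r where r: "0 < r" "r < 1" "norm (blaschke c as (complex_of_real r)) ^ m > norm \<gamma>"
      using eventually_happens'[OF _ eventually_conj[OF ev1 ev2]] by auto
    define \<zeta> where "\<zeta> = complex_of_real r"
    have \<zeta>b: "\<zeta> \<in> ball 0 1" using r by (simp add: \<zeta>_def)
    define w0 where "w0 = B0 \<zeta>"
    have w0b: "norm w0 < 1" using Bb \<zeta>b w0_def by auto
    have w0g: "norm w0 ^ m > norm \<gamma>" using r eq \<zeta>b by (simp add: w0_def \<zeta>_def)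
    have w0z: "w0 \<noteq> 0" using w0g assms(3) by (metis norm_ge_zero norm_zero not_less power_0_left not_gr0) 
    define c' where "c' = - \<gamma> / (- w0) ^ m"
    have c'n: "norm c' < 1"
      using w0g w0z by (simp add: c'_def norm_divide norm_power)
    define U where "U = (\<lambda>w. c' * Moebius_function 0 w0 w ^ m)"
    have Ub: "norm (U w) < 1" if "w \<in> ball 0 1" for w
    proof -
      have "norm (Moebius_function 0 w0 w) < 1"
        using that w0b by (intro Moebius_function_norm_lt_1) auto
      then have "norm (Moebius_function 0 w0 w ^ m) \<le> 1"
        by (simp add: norm_power power_le_one)
      then show ?thesis using c'n unfolding U_def norm_mult
        by (intro lt1) auto
    qed
    have Uh: "U holomorphic_on ball 0 1"
      unfolding U_def using w0b by (intro holomorphic_intros Moebius_function_holomorphic) 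
    define \<Phi> where "\<Phi> = Moebius_function 0 (-\<gamma>) \<circ> U"
    have \<Phi>h: "\<Phi> holomorphic_on ball 0 1"
      unfolding \<Phi>_def
      by (rule holomorphic_on_compose_gen[OF Uh Moebius_function_holomorphic]) (use g1 Ub in auto)
    have \<Phi>b: "norm (\<Phi> w) < 1" if "w \<in> ball 0 1" for w
      unfolding \<Phi>_def using Ub[OF that] g1 by (simp add: Moebius_function_norm_lt_1)
    have U0: "U 0 = - \<gamma>"
      using w0z by (simp add: U_def c'_def Moebius_function_simple)
    have \<Phi>0: "\<Phi> 0 = 0" by (simp add: \<Phi>_def U0 Moebius_function_eq_zero)
    define \<Psi> where "\<Psi> = (\<lambda>w. if w = 0 then deriv \<Phi> 0 else (\<Phi> w - \<Phi> 0) / (w - 0))"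
    have \<Psi>h: "\<Psi> holomorphic_on ball 0 1"
      unfolding \<Psi>_def by (rule pole_lemma[OF \<Phi>h]) auto
    define f where "f = \<Phi> \<circ> B0"
    define g where "g = \<Psi> \<circ> B0"
    have fh: "f holomorphic_on ball 0 1" unfolding f_def
      by (rule holomorphic_on_compose_gen[OF Bh \<Phi>h]) (use Bb in auto)
    have gh: "g holomorphic_on ball 0 1" unfolding g_def
      by (rule holomorphic_on_compose_gen[OF Bh \<Psi>h]) (use Bb in auto)
    have fb: "f ` ball 0 1 \<subseteq> ball 0 1" using Bb \<Phi>b by (auto simp: f_def)
    have fg: "\<forall>z\<in>ball 0 1. f z = B0 z * g z"
      by (auto simp: f_def g_def \<Psi>_def \<Phi>0)
    define P where "P = (\<lambda>h. B0 (\<zeta> + h) - w0)"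
    define K where "K = (\<lambda>h. c' * (1 - cnj \<gamma> * \<gamma>) /
        ((1 - cnj w0 * B0 (\<zeta> + h)) ^ m * (1 + cnj \<gamma> * (c' * ((B0 (\<zeta> + h) - w0) / (1 - cnj w0 * B0 (\<zeta> + h))) ^ m))))"
    have der: "(B0 has_field_derivative deriv B0 \<zeta>) (at \<zeta>)"
      using holomorphic_derivI[OF Bh _ \<zeta>b] by simp
    have PO: "P \<in> O[at 0](\<lambda>h. h)"
    proof (rule bigoI_tendsto)
      show "((\<lambda>h. P h / h) \<longlongrightarrow> deriv B0 \<zeta>) (at 0)"
        using der unfolding DERIV_def P_def w0_def .
      show "eventually (\<lambda>h::complex. h \<noteq> 0) (at 0)"
        by (simp add: eventually_at_filter)
    qed
    have Bc: "isCont (\<lambda>h. B0 (\<zeta> + h)) 0"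
    proof -
      have "isCont B0 (\<zeta> + 0)" using DERIV_isCont[OF der] by simp
      then show ?thesis by (intro isCont_o2[where f="\<lambda>h. \<zeta> + h" and a=0 and g=B0]) (auto intro: continuous_intros)
    qed
    have d10: "1 - cnj w0 * w0 \<noteq> 0"
      using w0b by (intro ne1 nm1)
    have Kc: "isCont K 0"
      unfolding K_def using Bc d10 assms(3) w0_def
      by (intro continuous_intros) (auto simp: w0_def power_0_left)
    have KO: "K \<in> O[at 0](\<lambda>_. 1)"
      using continuous_imp_bigo_1[OF Kc] by simp
    have PKO: "(\<lambda>h. P h ^ m * K h) \<in> O[at 0](\<lambda>h. h ^ m * 1)"
      by (intro landau_o.big.mult landau_o.big_power PO KO)
    have evb: "eventually (\<lambda>h. h \<in> ball 0 (1 - r)) (at (0::complex))"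
      using eventually_at_ball[of "1 - r" 0 UNIV] r by (auto simp: dist_norm elim!: eventually_mono)
    have "eventually (\<lambda>h. P h ^ m * K h = f (\<zeta> + h) - \<gamma>) (at 0)"
    proof (rule eventually_mono[OF evb])
      fix h assume h: "h \<in> ball (0::complex) (1 - r)"
      have zb: "\<zeta> + h \<in> ball 0 1"
        using h r norm_triangle_ineq[of \<zeta> h] by (simp add: \<zeta>_def)
      define w where "w = B0 (\<zeta> + h)"
      have wb: "w \<in> ball 0 1" using Bb[OF zb] by (simp add: w_def)
      have d1: "1 - cnj w0 * w \<noteq> 0"
        using w0b wb by (intro ne1 nm1) auto
      have Uw: "U w = c' * ((w - w0) / (1 - cnj w0 * w)) ^ m"
        by (simp add: U_def Moebius_function_simple)
      have d2: "1 + cnj \<gamma> * U w \<noteq> 0"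
      proof
        assume "1 + cnj \<gamma> * U w = 0"
        then have "norm (cnj \<gamma> * U w) = 1"
          by (metis add.inverse_inverse add_eq_0_iff norm_minus_cancel norm_one)
        moreover have "norm (cnj \<gamma> * U w) < 1"
          using g1 Ub[OF wb] by (simp add: norm_mult) (intro lt1; simp add: less_imp_le)
        ultimately show False by simp
      qed
      have "f (\<zeta> + h) - \<gamma> = (U w + \<gamma>) / (1 + cnj \<gamma> * U w) - \<gamma>"
        by (simp add: f_def \<Phi>_def w_def Moebius_function_simple)
      also have "\<dots> = U w * (1 - cnj \<gamma> * \<gamma>) / (1 + cnj \<gamma> * U w)"
        using d2 by (simp add: field_simps)
      also have "\<dots> = P h ^ m * K h"
        using d1 d2 unfolding Uw P_def K_def w_def[symmetric]
        by (simp add: field_simps power_divide)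
      finally show "P h ^ m * K h = f (\<zeta> + h) - \<gamma>" by simp
    qed
    then have "(\<lambda>h. f (\<zeta> + h) - \<gamma>) \<in> O[at 0](\<lambda>h. h ^ m)"
      using PKO landau_o.big.in_cong by fastforce
    then show ?thesis using \<zeta>b fh fb gh fg by blast
  qed
qed

end
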